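(* Let $\Omega=\{\omega_1<\dots<\omega_{|\mathcal{X}|}\}\subset\{1,\dots,|\mathcal{Y}|\}$ with $M_\Omega$ invertible, let $A=M_{\Omega}^{-1}M(1\!:\!|\mathcal{X}|)P_{X|Y_1}^{-1}$ with columns $a_1,\dots,a_{|\mathcal{X}|}$, and let $J_u\in\mathbb{R}^{|\mathcal{X}|}$ satisfy $\sum_x|J_u(x)|\le1$. Define $V\in\mathbb{R}^{|\mathcal{Y}|}$ by $V(\omega_i)=(M_\Omega^{-1}M\begin{bmatrix}P_{X|Y_1}^{-1}J_u\\0\end{bmatrix})(i)$ for $1\le i\le|\mathcal{X}|$ and $V(j)=0$ for $j\notin\Omega$. Then $\|V\|_1\le r$, where $r=\max_i \mathbf{1}^T|a_i|$ and $|a_i|$ denotes the entrywise absolute value of $a_i$.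
   Context: Setting: $X,Y$ on finite alphabets with $|\mathcal{X}|<|\mathcal{Y}|$; $P_{X|Y}\in\mathbb{R}^{|\mathcal{X}|\times|\mathcal{Y}|}$ has full row rank and $P_{X|Y}=[P_{X|Y_1},P_{X|Y_2}]$ with $P_{X|Y_1}$ (first $|\mathcal{X}|$ columns) invertible. With an SVD $P_{X|Y}=U\Sigma V^T$, $V=[v_1,\dots,v_{|\mathcal{Y}|}]$, set $M=[v_1,\dots,v_{|\mathcal{X}|}]^T$. $M_\Omega$ is the submatrix of $M$ with columns indexed by $\Omega$, and $M(1\!:\!|\mathcal{X}|)$ the submatrix of its first $|\mathcal{X}|$ columns. The zero block has size $|\mathcal{Y}|-|\mathcal{X}|$. *)

theory Defs
  imports "Jordan_Normal_Form.Gauss_Jordan_Elimination" "Jordan_Normal_Form.DL_Rank"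
begin

definition minv :: "real mat \<Rightarrow> real mat" where
  "minv A = the (mat_inverse A)"

definition sel_cols :: "real mat \<Rightarrow> (nat \<Rightarrow> nat) \<Rightarrow> nat \<Rightarrow> real mat" where
  "sel_cols A om k = mat (dim_row A) k (\<lambda>(i,j). A $$ (i, om j))"

definition first_cols :: "real mat \<Rightarrow> nat \<Rightarrow> real mat" where
  "first_cols A k = mat (dim_row A) k (\<lambda>(i,j). A $$ (i, j))"

definition norm1 :: "real vec \<Rightarrow> real" where
  "norm1 v = (\<Sum>i<dim_vec v. \<bar>v $ i\<bar>)"

end

theory Submission
  imports Defs
begin

lemma minv_carrier:
  assumes A: "A \<in> carrier_mat n n" and inv: "invertible_mat A"
  shows "minv A \<in> carrier_mat n n"
proof -
  from inv obtain B where AB: "A * B = 1\<^sub>m n" and BA: "B * A = 1\<^sub>m (dim_row B)"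
    unfolding invertible_mat_def inverts_mat_def using A by auto
  have dB: "dim_col B = n" using arg_cong[OF AB, of dim_col] by simp
  have dB2: "dim_row B = n" using arg_cong[OF BA, of dim_col] A by simp
  have Bc: "B \<in> carrier_mat n n" using dB dB2 by auto
  have "A \<in> Units (ring_mat TYPE(real) n ())"
    unfolding Units_def ring_mat_def using A Bc AB BA dB2 by auto
  then have "mat_inverse A \<noteq> None" using mat_inverse(1)[OF A, of "()"] by blast
  then obtain C where "mat_inverse A = Some C" by auto
  then show ?thesis using mat_inverse(2)[OF A] unfolding minv_def by auto
qed

theorem proposition7:
  fixes n m :: nat and P U S W :: "real mat" and om :: "nat \<Rightarrow> nat" and J :: "real vec"
  assumes "0 < n" and "n < m"
    and P: "P \<in> carrier_mat n m"
    and "\<forall>i<n. \<forall>j<m. 0 \<le> P $$ (i,j)"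
    and "\<forall>j<m. (\<Sum>i<n. P $$ (i,j)) = 1"
    and "vec_space.rank n P = n"
    and "invertible_mat (first_cols P n)"
    and "U \<in> carrier_mat n n" and "U * U\<^sup>T = 1\<^sub>m n" and "U\<^sup>T * U = 1\<^sub>m n"
    and "W \<in> carrier_mat m m" and "W * W\<^sup>T = 1\<^sub>m m" and "W\<^sup>T * W = 1\<^sub>m m"
    and "S \<in> carrier_mat n m"
    and "\<forall>i<n. \<forall>j<m. i \<noteq> j \<longrightarrow> S $$ (i,j) = 0"
    and "\<forall>i<n. 0 \<le> S $$ (i,i)"
    and "\<forall>i j. i \<le> j \<longrightarrow> j < n \<longrightarrow> S $$ (j,j) \<le> S $$ (i,i)"
    and "P = U * S * W\<^sup>T"
    and "strict_mono_on {..<n} om" and "\<forall>i<n. om i < m"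
    and "invertible_mat (sel_cols (mat n m (\<lambda>(i,j). W $$ (j,i))) om n)"
    and "J \<in> carrier_vec n" and "(\<Sum>x<n. \<bar>J $ x\<bar>) \<le> 1"
  shows
    "let M = mat n m (\<lambda>(i,j). W $$ (j,i));
         P1i = minv (first_cols P n);
         MOi = minv (sel_cols M om n);
         A = MOi * first_cols M n * P1i;
         r = Max {(\<Sum>k<n. \<bar>A $$ (k,i)\<bar>) | i. i < n};
         z = vec m (\<lambda>j. if j < n then (P1i *\<^sub>v J) $ j else 0);
         y = MOi *\<^sub>v (M *\<^sub>v z);
         V = vec m (\<lambda>j. if j \<in> om ` {..<n} then y $ (THE i. i < n \<and> om i = j) else 0)
     in norm1 V \<le> r"
proof -
  define M where "M = mat n m (\<lambda>(i,j). W $$ (j,i))"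
  define P1i where "P1i = minv (first_cols P n)"
  define MOi where "MOi = minv (sel_cols M om n)"
  define A where "A = MOi * first_cols M n * P1i"
  define r where "r = Max {(\<Sum>k<n. \<bar>A $$ (k,i)\<bar>) | i. i < n}"
  define z where "z = vec m (\<lambda>j. if j < n then (P1i *\<^sub>v J) $ j else 0)"
  define y where "y = MOi *\<^sub>v (M *\<^sub>v z)"
  define V where "V = vec m (\<lambda>j. if j \<in> om ` {..<n} then y $ (THE i. i < n \<and> om i = j) else 0)"
  have FP: "first_cols P n \<in> carrier_mat n n" using P unfolding first_cols_def by auto
  have P1: "P1i \<in> carrier_mat n n" unfolding P1i_def by (rule minv_carrier[OF FP assms(7)])
  have Mc: "M \<in> carrier_mat n m" unfolding M_def by auto
  have SM: "sel_cols M om n \<in> carrier_mat n n" using Mc unfolding sel_cols_def by auto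
  have MO: "MOi \<in> carrier_mat n n" unfolding MOi_def
    by (rule minv_carrier[OF SM]) (use assms(21) in \<open>simp add: M_def\<close>)
  have FM: "first_cols M n \<in> carrier_mat n n" using Mc unfolding first_cols_def by auto
  have Jc: "J \<in> carrier_vec n" by (rule assms(22))
  define w where "w = P1i *\<^sub>v J"
  have wc: "w \<in> carrier_vec n" using P1 Jc unfolding w_def by auto
  have Mz: "M *\<^sub>v z = first_cols M n *\<^sub>v w"
  proof
    show "dim_vec (M *\<^sub>v z) = dim_vec (first_cols M n *\<^sub>v w)" using Mc FM by simp
    fix i assume "i < dim_vec (first_cols M n *\<^sub>v w)"
    hence i: "i < n" using FM by simp
    have "(M *\<^sub>v z) $ i = (\<Sum>j<m. M $$ (i,j) * z $ j)"
      using Mc i unfolding mult_mat_vec_def scalar_prod_def z_def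
      by (simp add: lessThan_atLeast0)
    also have "\<dots> = (\<Sum>j<n. M $$ (i,j) * w $ j)"
    proof -
      have "(\<Sum>j<m. M $$ (i,j) * z $ j) = (\<Sum>j<n. M $$ (i,j) * z $ j) + (\<Sum>j\<in>{n..<m}. M $$ (i,j) * z $ j)"
        using assms(2) by (metis (no_types, lifting) lessThan_atLeast0 less_imp_le_nat sum.atLeastLessThan_concat zero_le)
      also have "(\<Sum>j\<in>{n..<m}. M $$ (i,j) * z $ j) = 0" unfolding z_def by simp
      also have "(\<Sum>j<n. M $$ (i,j) * z $ j) = (\<Sum>j<n. M $$ (i,j) * w $ j)"
        using assms(2) unfolding z_def w_def by (intro sum.cong) auto
      finally show ?thesis by simp
    qed
    also have "\<dots> = (first_cols M n *\<^sub>v w) $ i"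
      using Mc i wc unfolding mult_mat_vec_def scalar_prod_def first_cols_def
      by (simp add: lessThan_atLeast0)
    finally show "(M *\<^sub>v z) $ i = (first_cols M n *\<^sub>v w) $ i" .
  qed
  have yA: "y = A *\<^sub>v J"
    unfolding y_def Mz A_def w_def using MO FM P1 Jc
    by (simp add: assoc_mult_mat_vec[of _ n n _ n])
  have Ac: "A \<in> carrier_mat n n" unfolding A_def using MO FM P1 by auto
  have yi: "y $ i = (\<Sum>k<n. A $$ (i,k) * J $ k)" if "i < n" for i
    using yA Ac Jc that unfolding mult_mat_vec_def scalar_prod_def by (simp add: lessThan_atLeast0)
  have inj: "inj_on om {..<n}" using assms(19) strict_mono_on_imp_inj_on by blast
  have omlt: "om ` {..<n} \<subseteq> {..<m}" using assms(20) by auto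
  have "norm1 V = (\<Sum>j<m. \<bar>V $ j\<bar>)" unfolding norm1_def V_def by simp
  also have "\<dots> = (\<Sum>j\<in>om ` {..<n}. \<bar>V $ j\<bar>)"
    by (rule sum.mono_neutral_right) (use omlt in \<open>auto simp: V_def\<close>)
  also have "\<dots> = (\<Sum>i<n. \<bar>V $ om i\<bar>)" by (rule sum.reindex[OF inj, unfolded comp_def])
  also have "\<dots> = (\<Sum>i<n. \<bar>y $ i\<bar>)"
  proof (rule sum.cong)
    fix i assume i: "i \<in> {..<n}"
    have "(THE i'. i' < n \<and> om i' = om i) = i"
      using i inj by (auto intro!: the_equality dest: inj_onD)
    then show "\<bar>V $ om i\<bar> = \<bar>y $ i\<bar>" using i assms(20) unfolding V_def by auto
  qed simp
  also have "\<dots> \<le> (\<Sum>i<n. \<Sum>k<n. \<bar>A $$ (i,k)\<bar> * \<bar>J $ k\<bar>)"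
  proof (rule sum_mono)
    fix i assume "i \<in> {..<n}"
    then show "\<bar>y $ i\<bar> \<le> (\<Sum>k<n. \<bar>A $$ (i,k)\<bar> * \<bar>J $ k\<bar>)"
      using yi by (auto intro: order.trans[OF sum_abs] simp: abs_mult)
  qed
  also have "\<dots> = (\<Sum>k<n. (\<Sum>i<n. \<bar>A $$ (i,k)\<bar>) * \<bar>J $ k\<bar>)"
    by (subst sum.swap) (simp add: sum_distrib_right)
  also have "\<dots> \<le> (\<Sum>k<n. r * \<bar>J $ k\<bar>)"
  proof (rule sum_mono)
    fix k assume k: "k \<in> {..<n}"
    have "(\<Sum>i<n. \<bar>A $$ (i,k)\<bar>) \<le> r" unfolding r_def
      by (rule Max_ge) (use k in auto)
    then show "(\<Sum>i<n. \<bar>A $$ (i,k)\<bar>) * \<bar>J $ k\<bar> \<le> r * \<bar>J $ k\<bar>"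
      by (simp add: mult_right_mono)
  qed
  also have "\<dots> = r * (\<Sum>k<n. \<bar>J $ k\<bar>)" by (simp add: sum_distrib_left)
  also have "\<dots> \<le> r"
  proof -
    have "0 \<le> (\<Sum>i<n. \<bar>A $$ (i,0)\<bar>)" by (simp add: sum_nonneg)
    also have "\<dots> \<le> r" unfolding r_def by (rule Max_ge) (use assms(1) in auto)
    finally have "0 \<le> r" .
    then show ?thesis using assms(23) by (simp add: mult_left_le)
  qed
  finally show ?thesis
    unfolding Let_def M_def[symmetric] P1i_def[symmetric] MOi_def[symmetric] A_def[symmetric]
      r_def[symmetric] z_def[symmetric] y_def[symmetric] V_def[symmetric] .
qed

end
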